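(* Assume $\omega$ satisfies $\omega(x)/\mathrm{tr}\,\omega(x)\ge2\kappa I$ for all $x\in\mathbb Z^d$. There exist constants $\alpha_0\in(0,1)$ and $A_0\ge1$ depending on $\kappa$ (and $d$) such that for any $\alpha\in(0,\alpha_0)$ and $A\ge A_0$: (i) $L_\omega(e^{-2\alpha|x|/R})\le0$ for $x\in B_R\setminus B_{R/2}$, whenever $R\ge A_0$; (ii) $L_\omega(e^{-A|x|^2})\ge-\mathbb 1_{x=0}$ for all $x\in\mathbb Z^d$; (iii) $L_\omega(e^{-A|x|^2/R^2})>0$ for $x\in B_R\setminus B_{R/2}$, whenever $R\ge A^2$.
   Context: $\omega:\mathbb Z^d\to\{$positive-definite diagonal matrices$\}$, $\omega(x)=\mathrm{diag}[\omega_1(x),\dots,\omega_d(x)]$, $\kappa\in(0,\frac1{2d}]$. $L_\omega u(x)=\sum_{i=1}^d\frac{\omega_i(x)}{2\mathrm{tr}\,\omega(x)}[u(x+e_i)+u(x-e_i)-2u(x)]$. $B_r=\{x\in\mathbb Z^d:|x|<r\}$. *)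

theory Defs
  imports "HOL-Analysis.Analysis"
begin

text \<open>Points of Z^d are vectors int^'d (the dimension d = CARD('d)).
  An environment omega assigns to each lattice point the diagonal entries
  omega x i (i in 'd) of a positive-definite diagonal matrix.\<close>

definition unit_vec :: "'d::finite \<Rightarrow> int ^ 'd" where
  "unit_vec i = (\<chi> j. if j = i then 1 else 0)"

definition tr_env :: "(int ^ 'd \<Rightarrow> 'd::finite \<Rightarrow> real) \<Rightarrow> int ^ 'd \<Rightarrow> real" where
  "tr_env \<omega> x = (\<Sum>i\<in>UNIV. \<omega> x i)"

definition L_env :: "(int ^ 'd \<Rightarrow> 'd::finite \<Rightarrow> real) \<Rightarrow> (int ^ 'd \<Rightarrow> real) \<Rightarrow> int ^ 'd \<Rightarrow> real" where
  "L_env \<omega> u x = (\<Sum>i\<in>UNIV. \<omega> x i / (2 * tr_env \<omega> x) *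
        (u (x + unit_vec i) + u (x - unit_vec i) - 2 * u x))"

definition lnorm :: "int ^ 'd::finite \<Rightarrow> real" where
  "lnorm x = sqrt (\<Sum>i\<in>UNIV. (real_of_int (x $ i))\<^sup>2)"

definition lball :: "real \<Rightarrow> (int ^ 'd::finite) set" where
  "lball r = {x. lnorm x < r}"

end

theory Submission
  imports Defs
begin


lemma lnorm_nonneg: "0 \<le> lnorm x"
  unfolding lnorm_def by (simp add: sum_nonneg)

lemma lnorm_sq: "(lnorm x)^2 = (\<Sum>i\<in>UNIV. (real_of_int (x$i))^2)"
  unfolding lnorm_def by (simp add: sum_nonneg)

lemma lnorm_plus: "(lnorm (x + unit_vec i))^2 = (lnorm x)^2 + 2*real_of_int (x$i) + 1"
proof -
  have "\<And>j. (real_of_int ((x + unit_vec i)$j))^2 = (real_of_int (x$j))^2 + (if j = i then 2*real_of_int (x$i) + 1 else 0)"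
    by (auto simp: unit_vec_def power2_eq_square algebra_simps)
  then show ?thesis unfolding lnorm_sq by (simp add: sum.distrib)
qed

lemma lnorm_minus: "(lnorm (x - unit_vec i))^2 = (lnorm x)^2 - 2*real_of_int (x$i) + 1"
proof -
  have "\<And>j. (real_of_int ((x - unit_vec i)$j))^2 = (real_of_int (x$j))^2 + (if j = i then 1 - 2*real_of_int (x$i) else 0)"
    by (auto simp: unit_vec_def power2_eq_square algebra_simps)
  then show ?thesis unfolding lnorm_sq by (simp add: sum.distrib)
qed

lemma comp_le: "(real_of_int (x$i))^2 \<le> (lnorm x)^2"
  unfolding lnorm_sq by (rule member_le_sum) auto

lemma comp_abs_le: "\<bar>real_of_int (x$i)\<bar> \<le> lnorm x"
proof -
  have "\<bar>real_of_int (x$i)\<bar> \<le> \<bar>lnorm x\<bar>" using comp_le[of x i] by (simp add: abs_le_square_iff)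
  thus ?thesis using lnorm_nonneg[of x] by simp
qed

lemma exp_quad_upper:
  fixes x :: real assumes "\<bar>x\<bar> \<le> 1" shows "exp x \<le> 1 + x + 3/2 * x^2"
proof -
  obtain t where t: "\<bar>t\<bar> \<le> \<bar>x\<bar>" "exp x = (\<Sum>m<2. (x ^ m) / fact m) + (exp t / fact 2) * x ^ 2"
    using Maclaurin_exp_le[of x 2] by blast
  have "exp t \<le> exp 1" using t assms by simp
  also have "\<dots> \<le> 3" by (rule exp_le)
  finally have "exp t \<le> 3" .
  hence "(exp t / 2) * x^2 \<le> 3/2 * x^2" by (intro mult_right_mono) auto
  thus ?thesis using t by (simp add: numeral_2_eq_2)
qed

lemma cosh_lower: fixes t :: real shows "exp t + exp (-t) \<ge> 2 + t^2/2"
proof -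
  have *: "exp u + exp (-u) \<ge> 2 + u^2/2" if "u \<ge> 0" for u :: real
    using exp_lower_Taylor_quadratic[OF that] exp_ge_add_one_self[of "-u"] by simp
  show ?thesis
  proof (cases "t \<ge> 0")
    case True then show ?thesis using * by blast
  next
    case False then show ?thesis using *[of "-t"] by (simp add: add.commute)
  qed
qed

lemma sqrt_step:
  fixes s r v :: real assumes "s \<ge> 0" "r > 0" "s^2 = r^2 + v"
  shows "s = r + v/(2*r) - v^2/(2*r*(s+r)^2)"
proof -
  have sr: "s + r > 0" using assms by simp
  have "v = (s - r)*(s+r)" using assms(3) by (simp add: power2_eq_square algebra_simps)
  hence "v^2/(2*r*(s+r)^2) = (s-r)^2/(2*r)" using sr by (simp add: power_mult_distrib)
  moreover have "v/(2*r) = (s-r)*(s+r)/(2*r)" using \<open>v = _\<close> by simp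
  moreover have "(s-r)*(s+r)/(2*r) - (s-r)^2/(2*r) = s - r" using assms(2)
    by (simp add: field_simps power2_eq_square)
  ultimately show ?thesis by linarith
qed


lemma near_r:
  fixes s r w :: real assumes "s \<ge> 0" "r \<ge> 1" "s^2 = r^2 + w" "\<bar>w - 1\<bar> \<le> 2*r"
  shows "r - 1 \<le> s" "s \<le> r + 1"
proof -
  have e1: "(r-1)^2 = r^2 - 2*r + 1" by (simp add: power2_diff)
  have e2: "(r+1)^2 = r^2 + 2*r + 1" by (simp add: power2_sum)
  have w: "1 - 2*r \<le> w" "w \<le> 1 + 2*r" using assms(4) by linarith+
  have "(r-1)^2 \<le> s^2" using assms(3) w e1 by linarith
  thus "r - 1 \<le> s" using assms(1,2) power2_le_imp_le[of "r-1" s] by blast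
  have "s^2 \<le> (r+1)^2" using assms(3) w e2 by linarith
  thus "s \<le> r + 1" using assms(1,2) power2_le_imp_le[of s "r+1"] by simp
qed
lemma poly_ineq:
  fixes r y :: real assumes "r \<ge> 1" "y^2 \<le> r^2"
  shows "(4*y^2+1)*r^2 \<le> y^2*(2*r-1)^2 + 5*r*(2*r-1)^2"
proof -
  define Y where "Y = y^2"
  have "Y*(4*r-1) \<le> r^2*(4*r-1)" using assms unfolding Y_def by (intro mult_right_mono) auto
  hence P1: "4*(Y*r) - Y \<le> 4*r^3 - r^2" by (simp add: algebra_simps power3_eq_cube power2_eq_square)
  have "0 \<le> (r-1)^2" by simp
  hence "0 \<le> 16*(r-1)^2 + 12*r - 11" using assms by linarith
  hence "0 \<le> 16*r^2 - 20*r + 5" by (simp add: power2_diff)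
  hence "0 \<le> r*(16*r^2 - 20*r + 5)" using assms by simp
  hence P2: "0 \<le> 16*r^3 - 20*r^2 + 5*r" by (simp add: algebra_simps power3_eq_cube power2_eq_square)
  have E1: "(4*y^2+1)*r^2 = 4*(Y*r^2) + r^2" unfolding Y_def by (simp add: algebra_simps)
  have E2: "y^2*(2*r-1)^2 + 5*r*(2*r-1)^2 = 4*(Y*r^2) - 4*(Y*r) + Y + 20*r^3 - 20*r^2 + 5*r"
    unfolding Y_def by (simp add: algebra_simps power3_eq_cube power2_eq_square)
  show ?thesis unfolding E1 E2 using P1 P2 by linarith
qed



lemma sum_lower:
  fixes r y s1 s2 :: real
  assumes r: "r \<ge> 1" and y: "\<bar>y\<bar> \<le> r" and s1: "s1 \<ge> 0" "s1^2 = r^2 + (2*y+1)"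
    and s2: "s2 \<ge> 0" "s2^2 = r^2 + (1-2*y)"
  shows "s1 + s2 - 2*r \<ge> (r^2-y^2)/r^3 - 5/r^2"
proof -
  define v1 where "v1 = 2*y+1"
  define v2 where "v2 = 1-2*y"
  have rp: "r > 0" using r by simp
  have e1: "s1 = r + v1/(2*r) - v1^2/(2*r*(s1+r)^2)"
    using sqrt_step[OF s1(1) rp] s1(2) unfolding v1_def by simp
  have e2: "s2 = r + v2/(2*r) - v2^2/(2*r*(s2+r)^2)"
    using sqrt_step[OF s2(1) rp] s2(2) unfolding v2_def by simp
  have n1: "r - 1 \<le> s1" using near_r(1)[OF s1(1) r s1(2)] y by simp
  have n2: "r - 1 \<le> s2" using near_r(1)[OF s2(1) r s2(2)] y by simp
  have D: "0 < 2*r*(2*r-1)^2" using r by simp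
  have q1: "v1^2/(2*r*(s1+r)^2) \<le> v1^2/(2*r*(2*r-1)^2)"
  proof (rule divide_left_mono)
    have "(2*r-1)^2 \<le> (s1+r)^2" using n1 r by (intro power_mono) auto
    thus "2*r*(2*r-1)^2 \<le> 2*r*(s1+r)^2" using rp by simp
  qed (use D r n1 in auto)
  have q2: "v2^2/(2*r*(s2+r)^2) \<le> v2^2/(2*r*(2*r-1)^2)"
  proof (rule divide_left_mono)
    have "(2*r-1)^2 \<le> (s2+r)^2" using n2 r by (intro power_mono) auto
    thus "2*r*(2*r-1)^2 \<le> 2*r*(s2+r)^2" using rp by simp
  qed (use D r n2 in auto)
  have vs: "v1/(2*r) + v2/(2*r) = 1/r" unfolding v1_def v2_def using rp by (simp add: field_simps)
  have qs: "v1^2/(2*r*(2*r-1)^2) + v2^2/(2*r*(2*r-1)^2) = (4*y^2+1)*r^2/(r^3*(2*r-1)^2)"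
  proof -
    have "v1^2 + v2^2 = 2*(4*y^2+1)" unfolding v1_def v2_def by (simp add: power2_eq_square algebra_simps)
    hence "v1^2/(2*r*(2*r-1)^2) + v2^2/(2*r*(2*r-1)^2) = 2*(4*y^2+1)/(2*r*(2*r-1)^2)"
      by (simp add: add_divide_distrib[symmetric])
    also have "\<dots> = (4*y^2+1)/(r*(2*r-1)^2)" by (simp only: mult.assoc mult_divide_mult_cancel_left_if) simp
    also have "\<dots> = (4*y^2+1)*r^2/(r^3*(2*r-1)^2)" using rp
      by (simp add: power2_eq_square power3_eq_cube)
    finally show ?thesis .
  qed
  have y2: "y^2 \<le> r^2" using y rp by (simp add: abs_le_square_iff[symmetric])
  have D3: "0 < r^3*(2*r-1)^2" using r by simp
  have "(4*y^2+1)*r^2/(r^3*(2*r-1)^2) \<le> (y^2*(2*r-1)^2 + 5*r*(2*r-1)^2)/(r^3*(2*r-1)^2)"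
    using poly_ineq[OF r y2] D3 by (intro divide_right_mono) auto
  also have "\<dots> = y^2/r^3 + 5/r^2" using D3 rp r
    by (simp add: field_simps power2_eq_square power3_eq_cube)
  finally have fin: "(4*y^2+1)*r^2/(r^3*(2*r-1)^2) \<le> y^2/r^3 + 5/r^2" .
  have "(r^2-y^2)/r^3 = 1/r - y^2/r^3" using rp by (simp add: field_simps power2_eq_square power3_eq_cube)
  then show ?thesis using e1 e2 q1 q2 vs qs fin by linarith
qed



lemma one_exp:
  fixes r s c :: real assumes "\<bar>s - r\<bar> \<le> 1" "0 < c" "c \<le> 1"
  shows "exp (-c* s) \<le> exp (-c*r) * (1 - c*(s-r) + 3/2*c^2)"
proof -
  have t: "\<bar>-c*(s-r)\<bar> \<le> 1" using assms by (simp add: abs_mult) (metis mult_le_one abs_ge_zero less_imp_le)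
  have sq: "(-c*(s-r))^2 \<le> c^2"
  proof -
    have "(s-r)^2 \<le> 1" using assms(1) by (simp add: abs_le_square_iff[symmetric] abs_le_iff)
      (metis abs_le_square_iff abs_one one_power2 assms(1))
    hence "c^2*(s-r)^2 \<le> c^2*1" by (intro mult_left_mono) auto
    thus ?thesis by (simp add: power_mult_distrib)
  qed
  have "exp (-c* s) = exp (-c*r) * exp (-c*(s-r))" by (simp add: exp_add[symmetric] algebra_simps)
  also have "\<dots> \<le> exp (-c*r) * (1 + (-c*(s-r)) + 3/2*(-c*(s-r))^2)"
    using exp_quad_upper[OF t] by (intro mult_left_mono) auto
  also have "\<dots> \<le> exp (-c*r) * (1 - c*(s-r) + 3/2*c^2)"
    using sq by (intro mult_left_mono) auto
  finally show ?thesis .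
qed

lemma pair_exp:
  fixes r y s1 s2 c :: real
  assumes r: "r \<ge> 1" and y: "\<bar>y\<bar> \<le> r" and s1: "s1 \<ge> 0" "s1^2 = r^2 + (2*y+1)"
    and s2: "s2 \<ge> 0" "s2^2 = r^2 + (1-2*y)" and c: "0 < c" "c \<le> 1"
  shows "exp(-c* s1) + exp(-c* s2) - 2*exp(-c*r) \<le> exp(-c*r) * (-c*((r^2-y^2)/r^3 - 5/r^2) + 3*c^2)"
proof -
  have a1: "\<bar>s1 - r\<bar> \<le> 1" using near_r[OF s1(1) r s1(2)] y by (auto simp: abs_mult abs_le_iff)
  have a2: "\<bar>s2 - r\<bar> \<le> 1" using near_r[OF s2(1) r s2(2)] y by (auto simp: abs_mult abs_le_iff)
  have L: "s1 + s2 - 2*r \<ge> (r^2-y^2)/r^3 - 5/r^2" by (rule sum_lower[OF r y s1 s2])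
  have "exp(-c* s1) + exp(-c* s2) - 2*exp(-c*r) \<le> exp (-c*r) * (1 - c*(s1-r) + 3/2*c^2) + exp (-c*r) * (1 - c*(s2-r) + 3/2*c^2) - 2*exp(-c*r)"
    using one_exp[OF a1 c] one_exp[OF a2 c] by linarith
  also have "\<dots> = exp(-c*r) * (-c*(s1+s2-2*r) + 3*c^2)" by (simp add: algebra_simps)
  also have "\<dots> \<le> exp(-c*r) * (-c*((r^2-y^2)/r^3 - 5/r^2) + 3*c^2)"
    using L c by (intro mult_left_mono) auto
  finally show ?thesis .
qed



lemma env_facts:
  fixes \<omega> :: "int ^ 'd::finite \<Rightarrow> 'd \<Rightarrow> real"
  assumes pos: "\<forall>x i. 0 < \<omega> x i" and rat: "\<forall>x i. \<omega> x i / tr_env \<omega> x \<ge> 2 * \<kappa>"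
  shows "(\<Sum>i\<in>UNIV. \<omega> x i / (2 * tr_env \<omega> x)) = 1/2"
    and "\<And>i. \<kappa> \<le> \<omega> x i / (2 * tr_env \<omega> x)"
    and "\<And>i. 0 \<le> \<omega> x i / (2 * tr_env \<omega> x)"
proof -
  have tp: "0 < tr_env \<omega> x" unfolding tr_env_def using pos by (intro sum_pos) auto
  show "(\<Sum>i\<in>UNIV. \<omega> x i / (2 * tr_env \<omega> x)) = 1/2"
    using tp by (simp add: sum_divide_distrib[symmetric] tr_env_def[symmetric])
  show "\<kappa> \<le> \<omega> x i / (2 * tr_env \<omega> x)" for i
    using rat[rule_format, of x i] tp by (simp add: field_simps)
  show "0 \<le> \<omega> x i / (2 * tr_env \<omega> x)" for i
    using pos[rule_format, of x i] tp by simp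
qed

lemma gauss_split:
  fixes x :: "int ^ 'd::finite"
  shows "exp (- B * (lnorm (x + unit_vec i))\<^sup>2) + exp (- B * (lnorm (x - unit_vec i))\<^sup>2) - 2 * exp (- B * (lnorm x)\<^sup>2)
     = exp (- B * (lnorm x)\<^sup>2) * ((exp (- B * (2 * real_of_int (x$i) + 1)) + exp (- B * (1 - 2 * real_of_int (x$i)))) - 2)"
  unfolding lnorm_plus lnorm_minus by (simp add: exp_add[symmetric] algebra_simps)

lemma L_gauss:
  fixes \<omega> :: "int ^ 'd::finite \<Rightarrow> 'd \<Rightarrow> real"
  assumes pos: "\<forall>x i. 0 < \<omega> x i" and rat: "\<forall>x i. \<omega> x i / tr_env \<omega> x \<ge> 2 * \<kappa>"
  shows "L_env \<omega> (\<lambda>y. exp (- B * (lnorm y)\<^sup>2)) x = exp (- B * (lnorm x)\<^sup>2) *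
     ((\<Sum>i\<in>UNIV. \<omega> x i / (2 * tr_env \<omega> x) * (exp (- B * (2 * real_of_int (x$i) + 1)) + exp (- B * (1 - 2 * real_of_int (x$i))))) - 1)"
proof -
  let ?a = "\<lambda>i. \<omega> x i / (2 * tr_env \<omega> x)"
  let ?P = "\<lambda>i. exp (- B * (2 * real_of_int (x$i) + 1)) + exp (- B * (1 - 2 * real_of_int (x$i)))"
  have "L_env \<omega> (\<lambda>y. exp (- B * (lnorm y)\<^sup>2)) x = (\<Sum>i\<in>UNIV. exp (- B * (lnorm x)\<^sup>2) * (?a i * ?P i - 2 * ?a i))"
    unfolding L_env_def gauss_split by (intro sum.cong refl) (simp add: algebra_simps)
  also have "\<dots> = exp (- B * (lnorm x)\<^sup>2) * ((\<Sum>i\<in>UNIV. ?a i * ?P i) - 2 * (\<Sum>i\<in>UNIV. ?a i))"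
    by (simp add: sum_distrib_left[symmetric] sum_subtractf sum_distrib_left)
  also have "\<dots> = exp (- B * (lnorm x)\<^sup>2) * ((\<Sum>i\<in>UNIV. ?a i * ?P i) - 1)"
  proof -
    have "(\<Sum>i\<in>UNIV. ?a i) = 1/2" by (rule env_facts(1)[OF pos rat])
    thus ?thesis by simp
  qed
  finally show ?thesis .
qed



lemma part2:
  fixes \<omega> :: "int ^ 'd::finite \<Rightarrow> 'd \<Rightarrow> real"
  assumes pos: "\<forall>x i. 0 < \<omega> x i" and rat: "\<forall>x i. \<omega> x i / tr_env \<omega> x \<ge> 2 * \<kappa>"
    and A: "1 \<le> A" and kA: "1 \<le> \<kappa> * exp A"
  shows "L_env \<omega> (\<lambda>y. exp (- A * (lnorm y)\<^sup>2)) x \<ge> - (if x = 0 then 1 else 0)"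
proof -
  let ?a = "\<lambda>i. \<omega> x i / (2 * tr_env \<omega> x)"
  let ?P = "\<lambda>i. exp (- A * (2 * real_of_int (x$i) + 1)) + exp (- A * (1 - 2 * real_of_int (x$i)))"
  let ?U = "exp (- A * (lnorm x)\<^sup>2)"
  have L: "L_env \<omega> (\<lambda>y. exp (- A * (lnorm y)\<^sup>2)) x = ?U * ((\<Sum>i\<in>UNIV. ?a i * ?P i) - 1)"
    by (rule L_gauss[OF pos rat])
  have an: "\<And>i. 0 \<le> ?a i" using env_facts(3)[OF pos rat] .
  have Pn: "\<And>i. 0 \<le> ?a i * ?P i"
    by (intro mult_nonneg_nonneg an add_nonneg_nonneg less_imp_le[OF exp_gt_zero])
  have S0: "0 \<le> (\<Sum>i\<in>UNIV. ?a i * ?P i)" using Pn by (simp add: sum_nonneg)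
  have "0 \<le> A*(lnorm x)^2" using A by simp
  hence U1: "?U \<le> 1" by simp
  have U0: "0 < ?U" by simp
  show ?thesis
  proof (cases "x = 0")
    case True
    have "- 1 \<le> ?U * ((\<Sum>i\<in>UNIV. ?a i * ?P i) - 1)"
    proof -
      have "?U * (0 - 1) \<le> ?U * ((\<Sum>i\<in>UNIV. ?a i * ?P i) - 1)"
        using S0 by (intro mult_left_mono[OF _ less_imp_le[OF U0]]) linarith
      hence "- ?U \<le> ?U * ((\<Sum>i\<in>UNIV. ?a i * ?P i) - 1)" by simp
      thus ?thesis using U1 by linarith
    qed
    hence "-1 \<le> L_env \<omega> (\<lambda>y. exp (- A * (lnorm y)\<^sup>2)) x" using L by linarith
    thus ?thesis using True by simp
  next
    case False
    then obtain j where j: "x$j \<noteq> 0" by (auto simp: vec_eq_iff)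
    define z where "z = real_of_int (x$j)"
    have "x$j \<ge> 1 \<or> x$j \<le> -1" using j by presburger
    hence zc: "z \<ge> 1 \<or> z \<le> -1" unfolding z_def by (metis of_int_le_iff of_int_minus of_int_1)
    have Pj: "exp A \<le> ?P j"
    proof (cases "z \<ge> 1")
      case True
      hence "A * 1 \<le> A * (2 * z - 1)" using A by (intro mult_left_mono) auto
      hence "A \<le> - A * (1 - 2 * z)" by (simp add: algebra_simps)
      hence "exp A \<le> exp (- A * (1 - 2 * z))" by simp
      moreover have "0 < exp (- A * (2 * z + 1))" by simp
      ultimately show ?thesis unfolding z_def by linarith
    next
      case False
      hence "A * 1 \<le> A * (- 2 * z - 1)" using A zc by (intro mult_left_mono) auto
      hence "A \<le> - A * (2 * z + 1)" by (simp add: algebra_simps)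
      hence "exp A \<le> exp (- A * (2 * z + 1))" by simp
      moreover have "0 < exp (- A * (1 - 2 * z))" by simp
      ultimately show ?thesis unfolding z_def by linarith
    qed
    have "?a j * ?P j \<le> (\<Sum>i\<in>UNIV. ?a i * ?P i)"
      by (rule member_le_sum) (rule Pn | simp)+
    moreover have "\<kappa> * exp A \<le> ?a j * ?P j"
      by (rule mult_mono[OF env_facts(2)[OF pos rat, where i=j] Pj]) (use env_facts(3)[OF pos rat, where i=j] in auto)
    ultimately have "0 \<le> (\<Sum>i\<in>UNIV. ?a i * ?P i) - 1" using kA by linarith
    hence "0 \<le> ?U * ((\<Sum>i\<in>UNIV. ?a i * ?P i) - 1)" using U0 by (simp add: mult_nonneg_nonneg)
    hence "0 \<le> L_env \<omega> (\<lambda>y. exp (- A * (lnorm y)\<^sup>2)) x" using L by linarith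
    thus ?thesis using False by simp
  qed
qed



lemma part3:
  fixes \<omega> :: "int ^ 'd::finite \<Rightarrow> 'd \<Rightarrow> real"
  assumes pos: "\<forall>x i. 0 < \<omega> x i" and rat: "\<forall>x i. \<omega> x i / tr_env \<omega> x \<ge> 2 * \<kappa>"
    and kp: "0 < \<kappa>" and A: "1 \<le> A" and kA: "4 < \<kappa> * A" and R: "A\<^sup>2 \<le> R"
    and xr: "R / 2 \<le> lnorm x"
  shows "L_env \<omega> (\<lambda>y. exp (- A * (lnorm y)\<^sup>2 / R\<^sup>2)) x > 0"
proof -
  define B where "B = A / R^2"
  have R1: "1 \<le> R" using A R by (smt (verit) one_le_power)
  have "A \<le> A^2" using A by (simp add: power2_eq_square)
  hence "A \<le> R" using R by linarith
  also have "R \<le> R^2" using R1 by (simp add: power2_eq_square)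
  finally have AR: "A \<le> R^2" .
  have Rp: "0 < R^2" using R1 by simp
  have B0: "0 < B" unfolding B_def using A Rp by simp
  have B1: "B \<le> 1" unfolding B_def using AR Rp by simp
  have BR: "B * R^2 = A" unfolding B_def using Rp by simp
  have fneq: "(\<lambda>y. exp (- A * (lnorm y)\<^sup>2 / R\<^sup>2)) = (\<lambda>y. exp (- B * (lnorm y)\<^sup>2))"
    unfolding B_def by (simp add: field_simps)
  let ?a = "\<lambda>i. \<omega> x i / (2 * tr_env \<omega> x)"
  let ?y = "\<lambda>i. real_of_int (x$i)"
  let ?P = "\<lambda>i. exp (- B * (2 * ?y i + 1)) + exp (- B * (1 - 2 * ?y i))"
  let ?U = "exp (- B * (lnorm x)\<^sup>2)"
  have L: "L_env \<omega> (\<lambda>y. exp (- A * (lnorm y)\<^sup>2 / R\<^sup>2)) x = ?U * ((\<Sum>i\<in>UNIV. ?a i * ?P i) - 1)"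
    unfolding fneq by (rule L_gauss[OF pos rat])
  have an: "\<And>i. 0 \<le> ?a i" using env_facts(3)[OF pos rat] .
  have Pi: "exp (-B) * (2 + 2*B^2*(?y i)^2) \<le> ?P i" for i
  proof -
    have "?P i = exp (-B) * (exp (2*B*?y i) + exp (-(2*B*?y i)))"
      by (simp add: exp_add[symmetric] algebra_simps distrib_left)
    moreover have "2 + 2*B^2*(?y i)^2 \<le> exp (2*B*?y i) + exp (-(2*B*?y i))"
      using cosh_lower[of "2*B*?y i"] by (simp add: power_mult_distrib)
    ultimately show ?thesis by simp
  qed
  have "(\<Sum>i\<in>UNIV. ?a i * (exp (-B) * (2 + 2*B^2*(?y i)^2))) \<le> (\<Sum>i\<in>UNIV. ?a i * ?P i)"
    by (intro sum_mono mult_left_mono Pi an)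
  moreover have "(\<Sum>i\<in>UNIV. ?a i * (exp (-B) * (2 + 2*B^2*(?y i)^2)))
      = exp (-B) * (2 * (\<Sum>i\<in>UNIV. ?a i) + 2*B^2*(\<Sum>i\<in>UNIV. ?a i * (?y i)^2))"
    by (simp add: sum_distrib_left sum.distrib algebra_simps)
  moreover have "(\<Sum>i\<in>UNIV. ?a i) = 1/2" by (rule env_facts(1)[OF pos rat])
  moreover have "\<kappa> * (lnorm x)^2 \<le> (\<Sum>i\<in>UNIV. ?a i * (?y i)^2)"
  proof -
    have "\<kappa> * (lnorm x)^2 = (\<Sum>i\<in>UNIV. \<kappa> * (?y i)^2)" unfolding lnorm_sq by (simp add: sum_distrib_left)
    also have "\<dots> \<le> (\<Sum>i\<in>UNIV. ?a i * (?y i)^2)"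
      by (intro sum_mono mult_right_mono env_facts(2)[OF pos rat]) simp
    finally show ?thesis .
  qed
  moreover have "R^2 / 4 \<le> (lnorm x)^2"
  proof -
    have "0 \<le> R/2" using R1 by simp
    hence "(R/2)^2 \<le> (lnorm x)^2" using xr by (intro power_mono) auto
    thus ?thesis by (simp add: power_divide)
  qed
  ultimately have S: "exp (-B) * (1 + 2*B^2*(\<kappa> * (R^2/4))) \<le> (\<Sum>i\<in>UNIV. ?a i * ?P i)"
  proof -
    assume h1: "(\<Sum>i\<in>UNIV. ?a i * (exp (-B) * (2 + 2*B^2*(?y i)^2))) \<le> (\<Sum>i\<in>UNIV. ?a i * ?P i)"
      and h2: "(\<Sum>i\<in>UNIV. ?a i * (exp (-B) * (2 + 2*B^2*(?y i)^2)))
      = exp (-B) * (2 * (\<Sum>i\<in>UNIV. ?a i) + 2*B^2*(\<Sum>i\<in>UNIV. ?a i * (?y i)^2))"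
      and h3: "(\<Sum>i\<in>UNIV. ?a i) = 1/2" and h4: "\<kappa> * (lnorm x)^2 \<le> (\<Sum>i\<in>UNIV. ?a i * (?y i)^2)"
      and h5: "R^2 / 4 \<le> (lnorm x)^2"
    have "\<kappa> * (R^2/4) \<le> \<kappa> * (lnorm x)^2" using h5 kp by simp
    hence "\<kappa> * (R^2/4) \<le> (\<Sum>i\<in>UNIV. ?a i * (?y i)^2)" using h4 by linarith
    hence "2*B^2*(\<kappa> * (R^2/4)) \<le> 2*B^2*(\<Sum>i\<in>UNIV. ?a i * (?y i)^2)"
      by (rule mult_left_mono) simp
    hence "exp (-B) * (1 + 2*B^2*(\<kappa> * (R^2/4))) \<le> exp (-B) * (2 * (\<Sum>i\<in>UNIV. ?a i) + 2*B^2*(\<Sum>i\<in>UNIV. ?a i * (?y i)^2))"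
      using h3 by simp
    thus ?thesis using h1 h2 by linarith
  qed
  have "2*B^2*(\<kappa> * (R^2/4)) = B * (\<kappa> * A) / 2" using BR by (simp add: power2_eq_square algebra_simps)
  moreover have "exp B \<le> 1 + B + B^2" using exp_bound[of B] B0 B1 by simp
  moreover have "B^2 \<le> B" using B0 B1 by (simp add: power2_eq_square mult_le_cancel_left1)
  moreover have "B * 4 < B * (\<kappa> * A)" using kA B0 by simp
  ultimately have "exp B < 1 + 2*B^2*(\<kappa> * (R^2/4))" by linarith
  hence "exp (-B) * exp B < exp (-B) * (1 + 2*B^2*(\<kappa> * (R^2/4)))" by simp
  hence "1 < (\<Sum>i\<in>UNIV. ?a i * ?P i)" using S by (simp add: exp_minus)
  hence "0 < ?U * ((\<Sum>i\<in>UNIV. ?a i * ?P i) - 1)" by simp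
  thus ?thesis using L by simp
qed



lemma part1:
  fixes \<omega> :: "int ^ 'd::finite \<Rightarrow> 'd \<Rightarrow> real"
  assumes pos: "\<forall>x i. 0 < \<omega> x i" and rat: "\<forall>x i. \<omega> x i / tr_env \<omega> x \<ge> 2 * \<kappa>"
    and d2: "CARD('d) \<ge> 2" and kp: "0 < \<kappa>" and al: "0 < \<alpha>" "3 * \<alpha> \<le> \<kappa> / 2"
    and R: "2 \<le> R" "10 / R \<le> \<kappa> / 2" "2 * \<alpha> \<le> R"
    and xr: "R / 2 \<le> lnorm x" "lnorm x < R"
  shows "L_env \<omega> (\<lambda>y. exp (- 2 * \<alpha> * lnorm y / R)) x \<le> 0"
proof -
  define c where "c = 2 * \<alpha> / R"
  define r where "r = lnorm x"
  have Rp: "0 < R" using R by simp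
  have c0: "0 < c" unfolding c_def using al Rp by simp
  have c1: "c \<le> 1" unfolding c_def using R Rp by simp
  have r1: "1 \<le> r" unfolding r_def using xr R by simp
  have rp: "0 < r" using r1 by simp
  have fneq: "(\<lambda>y. exp (- 2 * \<alpha> * lnorm y / R)) = (\<lambda>y. exp (- c * lnorm y))"
    unfolding c_def by (simp add: field_simps)
  let ?a = "\<lambda>i. \<omega> x i / (2 * tr_env \<omega> x)"
  let ?y = "\<lambda>i. real_of_int (x$i)"
  let ?T = "\<lambda>i. (r^2 - (?y i)^2)/r^3 - 5/r^2"
  let ?E = "exp (- c * r)"
  have an: "\<And>i. 0 \<le> ?a i" using env_facts(3)[OF pos rat] .
  have Di: "exp (- c * lnorm (x + unit_vec i)) + exp (- c * lnorm (x - unit_vec i)) - 2 * exp (- c * lnorm x)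
      \<le> ?E * (- c * ?T i + 3 * c^2)" for i
  proof -
    have s1: "(lnorm (x + unit_vec i))^2 = r^2 + (2 * ?y i + 1)" unfolding r_def lnorm_plus by simp
    have s2: "(lnorm (x - unit_vec i))^2 = r^2 + (1 - 2 * ?y i)" unfolding r_def lnorm_minus by simp
    have y: "\<bar>?y i\<bar> \<le> r" unfolding r_def by (rule comp_abs_le)
    show ?thesis using pair_exp[OF r1 y lnorm_nonneg s1 lnorm_nonneg s2 c0 c1]
      unfolding r_def by simp
  qed
  have "L_env \<omega> (\<lambda>y. exp (- 2 * \<alpha> * lnorm y / R)) x
      = (\<Sum>i\<in>UNIV. ?a i * (exp (- c * lnorm (x + unit_vec i)) + exp (- c * lnorm (x - unit_vec i)) - 2 * exp (- c * lnorm x)))"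
    unfolding fneq L_env_def by simp
  also have "\<dots> \<le> (\<Sum>i\<in>UNIV. ?a i * (?E * (- c * ?T i + 3 * c^2)))"
    by (intro sum_mono mult_left_mono Di an)
  also have "\<dots> = ?E * (- c * (\<Sum>i\<in>UNIV. ?a i * ?T i) + 3 * c^2 * (\<Sum>i\<in>UNIV. ?a i))"
    by (simp add: sum_distrib_left sum.distrib algebra_simps sum_negf)
  finally have L: "L_env \<omega> (\<lambda>y. exp (- 2 * \<alpha> * lnorm y / R)) x \<le> ?E * (- c * (\<Sum>i\<in>UNIV. ?a i * ?T i) + 3 * c^2 * (\<Sum>i\<in>UNIV. ?a i))" .
  have sa: "(\<Sum>i\<in>UNIV. ?a i) = 1/2" by (rule env_facts(1)[OF pos rat])
  have sT: "(\<Sum>i\<in>UNIV. ?a i * ?T i) = (\<Sum>i\<in>UNIV. ?a i * (r^2 - (?y i)^2)) / r^3 - 5/r^2 * (\<Sum>i\<in>UNIV. ?a i)"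
  proof -
    have "(\<Sum>i\<in>UNIV. ?a i * ?T i) = (\<Sum>i\<in>UNIV. ?a i * (r^2 - (?y i)^2) / r^3 - 5/r^2 * ?a i)"
      by (intro sum.cong refl) (simp add: algebra_simps)
    also have "\<dots> = (\<Sum>i\<in>UNIV. ?a i * (r^2 - (?y i)^2) / r^3) - (\<Sum>i\<in>UNIV. 5/r^2 * ?a i)"
      by (rule sum_subtractf)
    also have "\<dots> = (\<Sum>i\<in>UNIV. ?a i * (r^2 - (?y i)^2)) / r^3 - 5/r^2 * (\<Sum>i\<in>UNIV. ?a i)"
      by (simp only: sum_divide_distrib[symmetric] sum_distrib_left[symmetric])
    finally show ?thesis .
  qed
  have "\<kappa> * r^2 \<le> \<kappa> * (real CARD('d) * r^2 - r^2)"
  proof -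
    have "2 \<le> real CARD('d)" using d2 by simp
    hence "2 * r^2 \<le> real CARD('d) * r^2" by (intro mult_right_mono) auto
    thus ?thesis using kp by simp
  qed
  also have "\<kappa> * (real CARD('d) * r^2 - r^2) = (\<Sum>i\<in>UNIV. \<kappa> * (r^2 - (?y i)^2))"
  proof -
    have e: "(\<Sum>i\<in>UNIV. (?y i)^2) = r^2" unfolding r_def lnorm_sq ..
    have "(\<Sum>i\<in>UNIV. \<kappa> * (r^2 - (?y i)^2)) = (\<Sum>i\<in>(UNIV::'d set). \<kappa> * r^2) - (\<Sum>i\<in>UNIV. \<kappa> * (?y i)^2)"
      by (simp add: right_diff_distrib sum_subtractf)
    also have "\<dots> = \<kappa> * (real CARD('d) * r^2) - \<kappa> * r^2"
      by (simp only: sum_distrib_left[symmetric] e) simp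
    finally show ?thesis by (simp add: algebra_simps)
  qed
  also have "\<dots> \<le> (\<Sum>i\<in>UNIV. ?a i * (r^2 - (?y i)^2))"
  proof (intro sum_mono mult_right_mono env_facts(2)[OF pos rat])
    fix i show "0 \<le> r^2 - (?y i)^2" unfolding r_def using comp_le[of x i] by simp
  qed
  finally have K: "\<kappa> * r^2 \<le> (\<Sum>i\<in>UNIV. ?a i * (r^2 - (?y i)^2))" .
  have K2: "\<kappa> / r \<le> (\<Sum>i\<in>UNIV. ?a i * (r^2 - (?y i)^2)) / r^3"
  proof -
    have "\<kappa> / r = \<kappa> * r^2 / r^3" using rp by (simp add: power2_eq_square power3_eq_cube)
    also have "\<dots> \<le> (\<Sum>i\<in>UNIV. ?a i * (r^2 - (?y i)^2)) / r^3" using K rp by (intro divide_right_mono) auto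
    finally show ?thesis .
  qed
  have k1: "\<kappa> / R \<le> \<kappa> / r" using kp rp xr unfolding r_def by (intro divide_left_mono) auto
  have k2: "5 / r^2 \<le> 20 / R^2"
  proof -
    have "(R/2)^2 \<le> r^2" using xr Rp unfolding r_def by (intro power_mono) auto
    hence "R^2 \<le> 4 * r^2" by (simp add: power_divide)
    hence "5 / r^2 \<le> 20 / R^2" using rp Rp by (simp add: field_simps)
    thus ?thesis .
  qed
  have k3: "20 / R^2 \<le> \<kappa> / R"
  proof -
    have "20 / R^2 = 2 * (10/R) / R" by (simp add: power2_eq_square)
    also have "\<dots> \<le> 2 * (\<kappa>/2) / R" using R Rp by (intro divide_right_mono) auto
    finally show ?thesis by simp
  qed
  have k4: "3 * c \<le> \<kappa> / R"
  proof -
    have "3 * c = 2 * (3 * \<alpha>) / R" unfolding c_def by simp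
    also have "\<dots> \<le> 2 * (\<kappa>/2) / R" using al Rp by (intro divide_right_mono) auto
    finally show ?thesis by simp
  qed
  have main: "3 * c^2 * (1/2) \<le> c * ((\<Sum>i\<in>UNIV. ?a i * (r^2 - (?y i)^2)) / r^3 - 5/r^2 * (1/2))"
  proof -
    have "3 * c / 2 \<le> (\<Sum>i\<in>UNIV. ?a i * (r^2 - (?y i)^2)) / r^3 - 5/r^2 * (1/2)"
    proof -
      have lin: "\<And>S a e f g k::real. k \<le> S \<Longrightarrow> a \<le> k \<Longrightarrow> e \<le> f \<Longrightarrow> f \<le> a \<Longrightarrow> 3*g \<le> a \<Longrightarrow> 3*g/2 \<le> S - e*(1/2)"
        by linarith
      show ?thesis by (rule lin[OF K2 k1 k2 k3 k4])
    qed
    hence "c * (3 * c / 2) \<le> c * ((\<Sum>i\<in>UNIV. ?a i * (r^2 - (?y i)^2)) / r^3 - 5/r^2 * (1/2))"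
      using c0 by (intro mult_left_mono) auto
    thus ?thesis by (simp add: power2_eq_square)
  qed
  have "- c * (\<Sum>i\<in>UNIV. ?a i * ?T i) + 3 * c^2 * (\<Sum>i\<in>UNIV. ?a i) \<le> 0"
    unfolding sT sa using main by simp
  hence "?E * (- c * (\<Sum>i\<in>UNIV. ?a i * ?T i) + 3 * c^2 * (\<Sum>i\<in>UNIV. ?a i)) \<le> 0"
    by (simp add: mult_nonneg_nonpos)
  thus ?thesis using L by linarith
qed


theorem lemma2p2:
  fixes \<kappa> :: real
  assumes d2: "CARD('d::finite) \<ge> 2"
    and \<kappa>pos: "0 < \<kappa>" and \<kappa>le: "\<kappa> \<le> 1 / (2 * real CARD('d))"
  shows "\<exists>\<alpha>0 A0::real. 0 < \<alpha>0 \<and> \<alpha>0 < 1 \<and> 1 \<le> A0 \<and>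
    (\<forall>\<omega> :: int ^ 'd \<Rightarrow> 'd \<Rightarrow> real.
       (\<forall>x i. 0 < \<omega> x i) \<and> (\<forall>x i. \<omega> x i / tr_env \<omega> x \<ge> 2 * \<kappa>) \<longrightarrow>
       (\<forall>\<alpha> A::real. 0 < \<alpha> \<and> \<alpha> < \<alpha>0 \<and> A0 \<le> A \<longrightarrow>
          (\<forall>R::real. A0 \<le> R \<longrightarrow>
             (\<forall>x \<in> lball R - lball (R / 2).
                L_env \<omega> (\<lambda>y. exp (- 2 * \<alpha> * lnorm y / R)) x \<le> 0)) \<and>
          (\<forall>x. L_env \<omega> (\<lambda>y. exp (- A * (lnorm y)\<^sup>2)) x \<ge> - (if x = 0 then 1 else 0)) \<and>
          (\<forall>R::real. A\<^sup>2 \<le> R \<longrightarrow>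
             (\<forall>x \<in> lball R - lball (R / 2).
                L_env \<omega> (\<lambda>y. exp (- A * (lnorm y)\<^sup>2 / R\<^sup>2)) x > 0))))"
proof -
  have k4: "\<kappa> \<le> 1/4"
  proof -
    have "1 / (2 * real CARD('d)) \<le> 1 / (2*2)" using d2 by (intro divide_left_mono) auto
    moreover have "(1::real) / (2*2) = 1/4" by simp
    ultimately show ?thesis using \<kappa>le by linarith
  qed
  define \<alpha>0 where "\<alpha>0 = \<kappa> / 6"
  define A0 where "A0 = 20 / \<kappa>"
  have A0k: "\<kappa> * A0 = 20" unfolding A0_def using \<kappa>pos by simp
  have A0b: "80 \<le> A0"
  proof -
    have "20 / (1/4) \<le> 20 / \<kappa>" using k4 \<kappa>pos by (intro divide_left_mono) auto
    thus ?thesis unfolding A0_def by simp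
  qed
  show ?thesis
  proof (rule exI[of _ \<alpha>0], rule exI[of _ A0], intro conjI)
    show "0 < \<alpha>0" "\<alpha>0 < 1" unfolding \<alpha>0_def using \<kappa>pos k4 by auto
    show "1 \<le> A0" using A0b by simp
  next
   show "\<forall>\<omega> :: int ^ 'd \<Rightarrow> 'd \<Rightarrow> real.
       (\<forall>x i. 0 < \<omega> x i) \<and> (\<forall>x i. \<omega> x i / tr_env \<omega> x \<ge> 2 * \<kappa>) \<longrightarrow>
       (\<forall>\<alpha> A::real. 0 < \<alpha> \<and> \<alpha> < \<alpha>0 \<and> A0 \<le> A \<longrightarrow>
          (\<forall>R::real. A0 \<le> R \<longrightarrow>
             (\<forall>x \<in> lball R - lball (R / 2).
                L_env \<omega> (\<lambda>y. exp (- 2 * \<alpha> * lnorm y / R)) x \<le> 0)) \<and>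
          (\<forall>x. L_env \<omega> (\<lambda>y. exp (- A * (lnorm y)\<^sup>2)) x \<ge> - (if x = 0 then 1 else 0)) \<and>
          (\<forall>R::real. A\<^sup>2 \<le> R \<longrightarrow>
             (\<forall>x \<in> lball R - lball (R / 2).
                L_env \<omega> (\<lambda>y. exp (- A * (lnorm y)\<^sup>2 / R\<^sup>2)) x > 0)))"
   proof (intro allI impI)
    fix \<omega> :: "int ^ 'd \<Rightarrow> 'd \<Rightarrow> real" and \<alpha> A :: real
    assume H: "(\<forall>x i. 0 < \<omega> x i) \<and> (\<forall>x i. \<omega> x i / tr_env \<omega> x \<ge> 2 * \<kappa>)"
    assume H2: "0 < \<alpha> \<and> \<alpha> < \<alpha>0 \<and> A0 \<le> A"
    have pos: "\<forall>x i. 0 < \<omega> x i" and rat: "\<forall>x i. \<omega> x i / tr_env \<omega> x \<ge> 2 * \<kappa>" using H by auto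
    have al: "0 < \<alpha>" "3 * \<alpha> \<le> \<kappa> / 2" "\<alpha> < 1" using H2 k4 unfolding \<alpha>0_def by auto
    have AA: "A0 \<le> A" using H2 by simp
    have kA: "20 \<le> \<kappa> * A" using A0k AA \<kappa>pos by (metis mult_left_mono less_imp_le)
    have A1: "1 \<le> A" using AA A0b by simp
    show "(\<forall>R::real. A0 \<le> R \<longrightarrow>
             (\<forall>x \<in> lball R - lball (R / 2).
                L_env \<omega> (\<lambda>y. exp (- 2 * \<alpha> * lnorm y / R)) x \<le> 0)) \<and>
          (\<forall>x. L_env \<omega> (\<lambda>y. exp (- A * (lnorm y)\<^sup>2)) x \<ge> - (if x = 0 then 1 else 0)) \<and>
          (\<forall>R::real. A\<^sup>2 \<le> R \<longrightarrow>
             (\<forall>x \<in> lball R - lball (R / 2).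
                L_env \<omega> (\<lambda>y. exp (- A * (lnorm y)\<^sup>2 / R\<^sup>2)) x > 0))"
    proof (intro conjI)
    show "\<forall>R. A0 \<le> R \<longrightarrow> (\<forall>x\<in>lball R - lball (R / 2). L_env \<omega> (\<lambda>y. exp (- 2 * \<alpha> * lnorm y / R)) x \<le> 0)"
    proof (intro allI impI ballI)
      fix R :: real and x :: "int ^ 'd" assume R: "A0 \<le> R" and x: "x \<in> lball R - lball (R / 2)"
      have xr: "R / 2 \<le> lnorm x" "lnorm x < R" using x unfolding lball_def by auto
      have "20 \<le> \<kappa> * R" using A0k R \<kappa>pos by (metis mult_left_mono less_imp_le)
      hence "10 / R \<le> \<kappa> / 2" using R A0b by (simp add: field_simps)
      moreover have "2 \<le> R" "2 * \<alpha> \<le> R" using R A0b al by auto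
      ultimately show "L_env \<omega> (\<lambda>y. exp (- 2 * \<alpha> * lnorm y / R)) x \<le> 0"
        using part1[OF pos rat d2 \<kappa>pos al(1,2) _ _ _ xr] by blast
    qed
    show "\<forall>x. L_env \<omega> (\<lambda>y. exp (- A * (lnorm y)\<^sup>2)) x \<ge> - (if x = 0 then 1 else 0)"
    proof
      fix x :: "int ^ 'd"
      have "A \<le> exp A" using exp_ge_add_one_self[of A] by linarith
      hence "\<kappa> * A \<le> \<kappa> * exp A" using \<kappa>pos by simp
      hence "1 \<le> \<kappa> * exp A" using kA by linarith
      thus "L_env \<omega> (\<lambda>y. exp (- A * (lnorm y)\<^sup>2)) x \<ge> - (if x = 0 then 1 else 0)"
        using part2[OF pos rat A1] by blast
    qed
    show "\<forall>R. A\<^sup>2 \<le> R \<longrightarrow> (\<forall>x\<in>lball R - lball (R / 2). L_env \<omega> (\<lambda>y. exp (- A * (lnorm y)\<^sup>2 / R\<^sup>2)) x > 0)"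
    proof (intro allI impI ballI)
      fix R :: real and x :: "int ^ 'd" assume R: "A\<^sup>2 \<le> R" and x: "x \<in> lball R - lball (R / 2)"
      have xr: "R / 2 \<le> lnorm x" using x unfolding lball_def by auto
      have "4 < \<kappa> * A" using kA by linarith
      thus "L_env \<omega> (\<lambda>y. exp (- A * (lnorm y)\<^sup>2 / R\<^sup>2)) x > 0"
        using part3[OF pos rat \<kappa>pos A1 _ R xr] by blast
    qed
    qed
   qed
  qed
qed

end
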